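(* For every natural number $n$ and every permutation $\sigma$, $$\sum_{\pi\in\mathcal{S}_n(\sigma)}t^{\mathrm{des}(\pi)}=\sum_{[y]\in[\mathrm{Cay}_n][\sigma^{-1}]}t^{\log_2|[y]|}.$$
   Context: $\mathrm{Cay}_n$ is the set of Cayley permutations of length $n$ (words of positive integers in which every integer from $1$ to the maximum occurs). Containment $y\le x$: indices $i_1<\dots<i_k$ ($k$ the length of $y$) with $x(i_s)<x(i_t)\iff y(s)<y(t)$ and $x(i_s)=x(i_t)\iff y(s)=y(t)$. $\mathcal{S}_n(\sigma)$ is the set of permutations of $[n]$ avoiding $\sigma$, and $\mathrm{des}(\pi)=|\{i:\pi(i)>\pi(i+1)\}|$. For $x\in\mathrm{Cay}_n$, $\gamma(x)$ is the permutation obtained by sorting the pairs $(x(i),i)$ increasingly by first coordinate, ties by decreasing second coordinate, and reading the second coordinates. $x\sim y$ iff $\gamma(x)=\gamma(y)$; $[y]$ is the class of $y$ (all its elements have the same length). For classes, $[x]\ge[y]$ iff $x'\ge y'$ for some $x'\in[x]$, $y'\in[y]$. $[\mathrm{Cay}_n][\sigma^{-1}]$ denotes the set of classes $[y]$ with $y\in\mathrm{Cay}_n$ and $[y]\not\ge[\sigma^{-1}]$. $t$ is an indeterminate. *)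

theory Defs
  imports Complex_Main "HOL-Computational_Algebra.Polynomial" "HOL-Library.Product_Lexorder"
begin

text \<open>Words are lists of naturals; positions are 0-based internally, values as in the paper.\<close>

definition Cay :: "nat \<Rightarrow> nat list set" where
  "Cay n = {x. length x = n \<and> (\<exists>m. set x = {1..m})}"

definition Perms :: "nat \<Rightarrow> nat list set" where
  "Perms n = {p. distinct p \<and> set p = {1..n}}"

definition is_perm :: "nat list \<Rightarrow> bool" where
  "is_perm p \<longleftrightarrow> distinct p \<and> set p = {1..length p}"

definition contains :: "nat list \<Rightarrow> nat list \<Rightarrow> bool" where
  "contains x y \<longleftrightarrow> (\<exists>is. length is = length y \<and> sorted_wrt (<) is \<and> (\<forall>i\<in>set is. i < length x) \<and>
     (\<forall>s<length y. \<forall>t<length y.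
        (x ! (is ! s) < x ! (is ! t) \<longleftrightarrow> y ! s < y ! t) \<and>
        (x ! (is ! s) = x ! (is ! t) \<longleftrightarrow> y ! s = y ! t)))"

definition Av :: "nat \<Rightarrow> nat list \<Rightarrow> nat list set" where
  "Av n \<sigma> = {\<pi> \<in> Perms n. \<not> contains \<pi> \<sigma>}"

definition des :: "nat list \<Rightarrow> nat" where
  "des p = card {i. Suc i < length p \<and> p ! i > p ! Suc i}"

definition perm_inv :: "nat list \<Rightarrow> nat list" where
  "perm_inv \<sigma> = map (\<lambda>j. Suc (THE i. i < length \<sigma> \<and> \<sigma> ! i = j)) [1..<Suc (length \<sigma>)]"

definition gamma :: "nat list \<Rightarrow> nat list" where
  "gamma x = map snd (sort_key (\<lambda>(v, i). (v, - int i)) (zip x [1..<Suc (length x)]))"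

definition cay_class :: "nat list \<Rightarrow> nat list set" where
  "cay_class y = {y'. (\<exists>m. set y' = {1..m}) \<and> gamma y' = gamma y}"

definition class_geq :: "nat list set \<Rightarrow> nat list set \<Rightarrow> bool" where
  "class_geq X Y \<longleftrightarrow> (\<exists>x'\<in>X. \<exists>y'\<in>Y. contains x' y')"

definition Cay_classes_avoiding :: "nat \<Rightarrow> nat list \<Rightarrow> nat list set set" where
  "Cay_classes_avoiding n \<tau> = {cay_class y | y. y \<in> Cay n \<and> \<not> class_geq (cay_class y) (cay_class \<tau>)}"

end

theory Submission
  imports Defs
begin


definition gkey :: "nat list \<Rightarrow> nat \<Rightarrow> nat \<times> int" where
  "gkey x i = (x!(i-1), - int i)"

lemma gkey_less: "gkey x i < gkey x j \<longleftrightarrow> x!(i-1) < x!(j-1) \<or> (x!(i-1) = x!(j-1) \<and> j < i)"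
  by (auto simp: gkey_def less_prod_def)

lemma gkey_inj: "inj_on (gkey x) A"
  by (auto simp: inj_on_def gkey_def)

lemma gamma_basic:
  fixes x :: "nat list"
  defines "n \<equiv> length x"
  shows "length (gamma x) = n" "set (gamma x) = {1..n}" "distinct (gamma x)"
    "sorted_wrt (\<lambda>i j. gkey x i < gkey x j) (gamma x)"
proof -
  define K where "K = (\<lambda>(v::nat, i::nat). (v, - int i))"
  define L where "L = zip x [1..<Suc n]"
  define S where "S = sort_key K L"
  have g: "gamma x = map snd S" unfolding gamma_def S_def L_def K_def n_def by simp
  have setL: "set L = (\<lambda>i. (x!(i-1), i)) ` {1..n}"
  proof -
    have "set L = (\<lambda>i. (x!i, Suc i)) ` {..<n}"
      unfolding L_def by (auto simp: set_zip n_def image_def nth_upt simp del: upt_Suc)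
    also have "\<dots> = (\<lambda>i. (x!(i-1), i)) ` {1..n}"
      unfolding image_Suc_lessThan[symmetric] image_image by simp
    finally show ?thesis .
  qed
  have lenS: "length S = n" unfolding S_def L_def n_def by (simp del: upt_Suc)
  show "length (gamma x) = n" using g lenS by simp
  have setS: "set S = set L" unfolding S_def by simp
  show sg: "set (gamma x) = {1..n}" unfolding g set_map setS setL by (simp add: image_image)
  show "distinct (gamma x)"
    by (rule card_distinct) (simp add: sg \<open>length (gamma x) = n\<close>)
  have elem: "e = (x!(snd e - 1), snd e)" if "e \<in> set S" for e
    using that setS setL by auto
  have "map (gkey x) (gamma x) = map K S"
    unfolding g map_map
  proof (rule map_cong[OF refl])
    fix e assume "e \<in> set S"
    then have e: "e = (x!(snd e - 1), snd e)" by (rule elem)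
    obtain a b where ab: "e = (a, b)" by (cases e)
    with e have "a = x!(b-1)" by simp
    then show "(gkey x \<circ> snd) e = K e" by (simp add: ab K_def gkey_def)
  qed
  moreover have "sorted (map K S)" unfolding S_def by simp
  moreover have "distinct (map K S)"
  proof -
    have "inj_on K (set S)"
    proof (rule inj_onI)
      fix e1 e2 assume 1: "e1 \<in> set S" and 2: "e2 \<in> set S" and "K e1 = K e2"
      then have "snd e1 = snd e2" by (simp add: K_def split: prod.splits)
      then show "e1 = e2" using elem[OF 1] elem[OF 2] by metis
    qed
    moreover have "distinct S" unfolding S_def L_def by (simp add: distinct_zipI2)
    ultimately show ?thesis by (simp add: distinct_map)
  qed
  ultimately have "sorted_wrt (<) (map (gkey x) (gamma x))"
    by (simp add: strict_sorted_iff)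
  then show "sorted_wrt (\<lambda>i j. gkey x i < gkey x j) (gamma x)"
    by (simp add: sorted_wrt_map)
qed


lemma gamma_length[simp]: "length (gamma x) = length x"
  using gamma_basic(1) by blast

lemma gamma_unique:
  assumes "distinct p" "set p = {1..length x}" "sorted_wrt (\<lambda>i j. gkey x i < gkey x j) p"
  shows "p = gamma x"
proof -
  have a: "sorted_wrt (<) (map (gkey x) p)" using assms(3) by (simp add: sorted_wrt_map)
  have b: "sorted_wrt (<) (map (gkey x) (gamma x))" using gamma_basic(4)[of x] by (simp add: sorted_wrt_map)
  have "set (map (gkey x) p) = set (map (gkey x) (gamma x))"
    using assms(2) gamma_basic(2)[of x] by simp
  then have "map (gkey x) p = map (gkey x) (gamma x)"
    using a b sorted_distinct_set_unique strict_sorted_iff by blast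
  then show ?thesis using gkey_inj inj_on_map_eq_map by blast
qed

lemma gkey_sorted_iff:
  "sorted_wrt (\<lambda>i j. gkey x i < gkey x j) p \<longleftrightarrow> (\<forall>a. Suc a < length p \<longrightarrow> gkey x (p!a) < gkey x (p!Suc a))"
  by (rule sorted_wrt_iff_nth_Suc_transp) (auto simp: transp_def)

definition pos :: "nat list \<Rightarrow> nat \<Rightarrow> nat" where
  "pos p j = (THE i. i < length p \<and> p!i = j)"

lemma pos: assumes "distinct p" "j \<in> set p" shows "pos p j < length p" "p ! (pos p j) = j"
proof -
  have "\<exists>!i. i < length p \<and> p!i = j" using distinct_Ex1[OF assms] .
  from theI'[OF this] show "pos p j < length p" "p ! (pos p j) = j" unfolding pos_def by auto
qed

lemma pos_nth: assumes "distinct p" "a < length p" shows "pos p (p!a) = a"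
  unfolding pos_def using assms by (auto intro!: the_equality simp: nth_eq_iff_index_eq)

lemma perm_inv_pos: "perm_inv p = map (\<lambda>j. Suc (pos p j)) [1..<Suc (length p)]"
  by (simp add: perm_inv_def pos_def)

lemma perm_inv_length[simp]: "length (perm_inv p) = length p"
  by (simp add: perm_inv_pos del: upt_Suc)

lemma perm_inv_nth: assumes "1 \<le> j" "j \<le> length p" shows "perm_inv p ! (j-1) = Suc (pos p j)"
proof -
  have "[1..<Suc (length p)] ! (j-1) = j" using assms by (simp add: nth_upt del: upt_Suc)
  then show ?thesis using assms unfolding perm_inv_pos by (simp del: upt_Suc)
qed

lemma is_perm_mem: "is_perm p \<Longrightarrow> a < length p \<Longrightarrow> 1 \<le> p!a \<and> p!a \<le> length p"
  unfolding is_perm_def by (metis atLeastAtMost_iff nth_mem)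

lemma perm_inv_nth2: assumes "is_perm p" "a < length p" shows "perm_inv p ! (p!a - 1) = Suc a"
  using perm_inv_nth[of "p!a" p] is_perm_mem[OF assms] pos_nth[of p a] assms
  unfolding is_perm_def by simp

lemma perm_inv_perm: assumes "is_perm p" shows "is_perm (perm_inv p)"
proof -
  let ?L = "length p"
  have d: "distinct p" and sp: "set p = {1..?L}" using assms by (auto simp: is_perm_def)
  have "set (perm_inv p) \<subseteq> {1..?L}"
  proof
    fix k assume "k \<in> set (perm_inv p)"
    then obtain j where "j \<in> set [1..<Suc ?L]" "k = Suc (pos p j)" unfolding perm_inv_pos set_map by blast
    then have "j \<in> {1..?L}" "k = Suc (pos p j)" by (auto simp del: upt_Suc)
    then show "k \<in> {1..?L}" using pos(1)[OF d, of j] sp by auto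
  qed
  moreover have "{1..?L} \<subseteq> set (perm_inv p)"
  proof
    fix k assume k: "k \<in> {1..?L}"
    then have "k - 1 < ?L" by auto
    then have "perm_inv p ! (p!(k-1) - 1) = k" using perm_inv_nth2[OF assms] k by auto
    moreover have "p!(k-1) - 1 < ?L" using is_perm_mem[OF assms \<open>k - 1 < ?L\<close>] by auto
    ultimately show "k \<in> set (perm_inv p)" by (metis nth_mem perm_inv_length)
  qed
  ultimately have s: "set (perm_inv p) = {1..?L}" by blast
  then have "distinct (perm_inv p)" by (intro card_distinct) simp
  then show ?thesis using s by (simp add: is_perm_def)
qed

lemma gamma_perm_inv: assumes "is_perm p" shows "gamma (perm_inv p) = p"
proof -
  have "p = gamma (perm_inv p)"
  proof (rule gamma_unique)
    show "distinct p" "set p = {1..length (perm_inv p)}" using assms by (auto simp: is_perm_def)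
    show "sorted_wrt (\<lambda>i j. gkey (perm_inv p) i < gkey (perm_inv p) j) p"
      unfolding sorted_wrt_iff_nth_less
    proof (intro allI impI)
      fix i j assume "i < j" "j < length p"
      then have A: "perm_inv p ! (p!i - 1) = Suc i" and B: "perm_inv p ! (p!j - 1) = Suc j"
        using perm_inv_nth2[OF assms] by auto
      show "gkey (perm_inv p) (p ! i) < gkey (perm_inv p) (p ! j)"
        unfolding gkey_less A B using \<open>i < j\<close> by simp
    qed
  qed
  then show ?thesis by simp
qed

lemma gamma_perm: assumes "is_perm p" shows "gamma p = perm_inv p"
proof -
  have d: "distinct p" and sp: "set p = {1..length p}" using assms by (auto simp: is_perm_def)
  have "perm_inv p = gamma p"
  proof (rule gamma_unique)
    show "distinct (perm_inv p)" "set (perm_inv p) = {1..length p}"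
      using perm_inv_perm[OF assms] by (auto simp: is_perm_def)
    have e: "p ! (perm_inv p ! a - 1) = Suc a" if "a < length p" for a
    proof -
      have "perm_inv p ! a = Suc (pos p (Suc a))" using perm_inv_nth[of "Suc a" p] that by simp
      then show ?thesis using pos(2)[OF d, of "Suc a"] sp that by simp
    qed
    show "sorted_wrt (\<lambda>i j. gkey p i < gkey p j) (perm_inv p)"
      unfolding sorted_wrt_iff_nth_less
    proof (intro allI impI)
      fix i j assume "i < j" "j < length (perm_inv p)"
      then have A: "p ! (perm_inv p ! i - 1) = Suc i" and B: "p ! (perm_inv p ! j - 1) = Suc j"
        using e by auto
      show "gkey p (perm_inv p ! i) < gkey p (perm_inv p ! j)"
        unfolding gkey_less A B using \<open>i < j\<close> by simp
    qed
  qed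
  then show ?thesis by simp
qed

lemma strict_idx: "sorted_wrt (<) (is::nat list) \<Longrightarrow> s < length is \<Longrightarrow> t < length is \<Longrightarrow> is!s < is!t \<longleftrightarrow> s < t"
  by (metis linorder_neqE_nat order_less_asym sorted_wrt_nth_less)

lemma strict_idx_eq: "sorted_wrt (<) (is::nat list) \<Longrightarrow> s < length is \<Longrightarrow> t < length is \<Longrightarrow> is!s = is!t \<longleftrightarrow> s = t"
  by (metis linorder_neqE_nat order_less_irrefl sorted_wrt_nth_less)

lemma pos_less_iff:
  assumes "i \<in> set (gamma x)" "j \<in> set (gamma x)"
  shows "pos (gamma x) i < pos (gamma x) j \<longleftrightarrow> gkey x i < gkey x j"
proof -
  let ?p = "gamma x"
  have d: "distinct ?p" by (rule gamma_basic(3))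
  have so: "sorted_wrt (\<lambda>i j. gkey x i < gkey x j) ?p" by (rule gamma_basic(4))
  note pi = pos[OF d assms(1)] and pj = pos[OF d assms(2)]
  show ?thesis
  proof
    assume "pos ?p i < pos ?p j"
    from sorted_wrt_nth_less[OF so this pj(1)] show "gkey x i < gkey x j" using pi pj by simp
  next
    assume l: "gkey x i < gkey x j"
    show "pos ?p i < pos ?p j"
    proof (rule ccontr)
      assume "\<not> ?thesis"
      then consider "pos ?p i = pos ?p j" | "pos ?p j < pos ?p i" by linarith
      then show False
      proof cases
        case 1 then have "i = j" using pi pj by metis
        then show False using l by simp
      next
        case 2
        from sorted_wrt_nth_less[OF so this pi(1)] have "gkey x j < gkey x i" using pi pj by simp
        then show False using l by simp
      qed
    qed
  qed
qed

lemma contains_gamma: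
  assumes "contains x y"
  shows "contains (gamma x) (gamma y)"
proof -
  obtain "is" where len: "length is = length y" and so: "sorted_wrt (<) is"
    and bd: "\<forall>i\<in>set is. i < length x"
    and iso: "\<forall>s<length y. \<forall>t<length y.
        (x ! (is ! s) < x ! (is ! t) \<longleftrightarrow> y ! s < y ! t) \<and>
        (x ! (is ! s) = x ! (is ! t) \<longleftrightarrow> y ! s = y ! t)"
    using assms unfolding contains_def by blast
  define n where "n = length x"
  define k where "k = length y"
  define \<pi> where "\<pi> = gamma x"
  define \<rho> where "\<rho> = gamma y"
  have sp: "set \<pi> = {1..n}" unfolding \<pi>_def n_def by (rule gamma_basic(2))
  have sr: "set \<rho> = {1..k}" unfolding \<rho>_def k_def by (rule gamma_basic(2))
  have lr: "length \<rho> = k" unfolding \<rho>_def k_def by simp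
  have lp: "length \<pi> = n" unfolding \<pi>_def n_def by simp
  have dp: "distinct \<pi>" unfolding \<pi>_def by (rule gamma_basic(3))
  have isn: "is!s < n" if "s < k" for s using bd that len unfolding n_def k_def by auto
  have inpi: "is!s + 1 \<in> set \<pi>" if "s < k" for s using isn[OF that] sp by auto
  have rho_mem: "1 \<le> \<rho>!a \<and> \<rho>!a \<le> k" if "a < k" for a using sr lr that
    by (metis atLeastAtMost_iff nth_mem)
  have cmp: "gkey x (is!s + 1) < gkey x (is!t + 1) \<longleftrightarrow> gkey y (s+1) < gkey y (t+1)"
    if "s < k" "t < k" for s t
    using iso[rule_format, of s t] that strict_idx[OF so, of t s] len
    unfolding gkey_less k_def by auto
  define js where "js = map (\<lambda>a. pos \<pi> (is!(\<rho>!a - 1) + 1)) [0..<k]"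
  have ljs: "length js = k" unfolding js_def by simp
  have jsn: "js!a = pos \<pi> (is!(\<rho>!a - 1) + 1)" if "a < k" for a unfolding js_def using that by simp
  have pjs: "\<pi>!(js!a) = is!(\<rho>!a - 1) + 1" if "a < k" for a
    using jsn[OF that] pos(2)[OF dp inpi] rho_mem[OF that] by auto
  show ?thesis unfolding contains_def
  proof (intro exI[of _ js] conjI)
    show "length js = length (gamma y)" using ljs lr \<rho>_def by simp
    show "\<forall>i\<in>set js. i < length (gamma x)"
    proof
      fix i assume "i \<in> set js"
      then obtain a where "a < k" "i = js!a" using ljs by (auto simp: in_set_conv_nth)
      then show "i < length (gamma x)" using jsn pos(1)[OF dp inpi] rho_mem lp \<pi>_def
        by (metis Suc_le_eq diff_less less_le_trans zero_less_one)
    qed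
    show "sorted_wrt (<) js"
      unfolding sorted_wrt_iff_nth_less
    proof (intro allI impI)
      fix a b assume ab: "a < b" "b < length js"
      then have a: "a < k" and b: "b < k" using ljs by auto
      have "gkey y (\<rho>!a) < gkey y (\<rho>!b)"
        using sorted_wrt_nth_less[OF gamma_basic(4)[of y], of a b] ab ljs lr \<rho>_def by simp
      then have "gkey y ((\<rho>!a - 1) + 1) < gkey y ((\<rho>!b - 1) + 1)"
        using rho_mem[OF a] rho_mem[OF b] by simp
      then have "gkey x (is!(\<rho>!a - 1) + 1) < gkey x (is!(\<rho>!b - 1) + 1)"
        using cmp rho_mem[OF a] rho_mem[OF b] by (metis Suc_le_eq diff_less less_le_trans zero_less_one)
      then show "js!a < js!b" unfolding jsn[OF a] jsn[OF b]
        using pos_less_iff[of _ x] inpi rho_mem a b \<pi>_def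
        by (metis Suc_le_eq diff_less less_le_trans zero_less_one)
    qed
    show "\<forall>s<length (gamma y). \<forall>t<length (gamma y).
       (gamma x ! (js ! s) < gamma x ! (js ! t)) = (gamma y ! s < gamma y ! t) \<and>
       (gamma x ! (js ! s) = gamma x ! (js ! t)) = (gamma y ! s = gamma y ! t)"
    proof (intro allI impI)
      fix a b assume a: "a < length (gamma y)" and b: "b < length (gamma y)"
      then have a': "a < k" and b': "b < k" using lr \<rho>_def by auto
      have ia: "\<rho>!a - 1 < length is" and ib: "\<rho>!b - 1 < length is"
        using rho_mem[OF a'] rho_mem[OF b'] len k_def by auto
      have "(\<pi>!(js!a) < \<pi>!(js!b)) = (\<rho>!a < \<rho>!b)"
        unfolding pjs[OF a'] pjs[OF b'] using strict_idx[OF so ia ib] rho_mem[OF a'] rho_mem[OF b'] by auto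
      moreover have "(\<pi>!(js!a) = \<pi>!(js!b)) = (\<rho>!a = \<rho>!b)"
        unfolding pjs[OF a'] pjs[OF b'] using strict_idx_eq[OF so ia ib] rho_mem[OF a'] rho_mem[OF b'] by auto
      ultimately show "(gamma x ! (js ! a) < gamma x ! (js ! b)) = (gamma y ! a < gamma y ! b) \<and>
       (gamma x ! (js ! a) = gamma x ! (js ! b)) = (gamma y ! a = gamma y ! b)"
        unfolding \<pi>_def \<rho>_def by simp
    qed
  qed
qed



definition cls :: "nat list \<Rightarrow> nat list set" where
  "cls p = {y. (\<exists>m. set y = {1..m}) \<and> gamma y = p}"

definition cc :: "nat set \<Rightarrow> nat \<Rightarrow> nat" where
  "cc S j = 1 + card {i. i < j \<and> i \<notin> S}"

lemma cc_0[simp]: "cc S 0 = 1" by (simp add: cc_def)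

lemma cc_Suc: "cc S (Suc j) = cc S j + (if j \<in> S then 0 else 1)"
proof -
  have "{i. i < Suc j \<and> i \<notin> S} = {i. i < j \<and> i \<notin> S} \<union> (if j \<in> S then {} else {j})"
    by (auto simp: less_Suc_eq)
  then show ?thesis unfolding cc_def by (auto simp: card_insert_if)
qed

lemma cc_mono: "a \<le> b \<Longrightarrow> cc S a \<le> cc S b"
  unfolding cc_def by (auto intro!: card_mono)

lemma cc_image: "cc S ` {..<Suc m} = {1..cc S m}"
proof (induction m)
  case 0 then show ?case by (auto simp: lessThan_Suc)
next
  case (Suc m)
  have "cc S ` {..<Suc (Suc m)} = insert (cc S (Suc m)) (cc S ` {..<Suc m})"
    by (simp add: lessThan_Suc)
  also have "\<dots> = {1..cc S (Suc m)}" unfolding Suc cc_Suc using cc_mono[of 0 m S]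
    by (auto simp: atLeastAtMostSuc_conv)
  finally show ?case .
qed

definition mkX :: "nat list \<Rightarrow> nat set \<Rightarrow> nat list" where
  "mkX p S = map (\<lambda>i. cc S (pos p (Suc i))) [0..<length p]"

lemma card_cls:
  assumes "is_perm p"
  shows "card (cls p) = 2 ^ des p"
proof -
  define n where "n = length p"
  have d: "distinct p" and sp: "set p = {1..n}" using assms by (auto simp: is_perm_def n_def)
  define D where "D = {j. Suc j < n \<and> p!j > p!Suc j}"
  have desD: "des p = card D" unfolding des_def D_def n_def by simp
  have finD: "finite D" unfolding D_def by (rule finite_subset[of _ "{..<n}"]) auto
  have pmem: "1 \<le> p!a \<and> p!a \<le> n" if "a < n" for a using is_perm_mem[OF assms] that n_def by simp
  have posS: "pos p (Suc i) < n" "p ! pos p (Suc i) = Suc i" if "i < n" for i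
    using pos[OF d, of "Suc i"] sp that n_def by auto
  have posn: "pos p (p!a) = a" if "a < n" for a using pos_nth[OF d] that n_def by simp
  have lX: "length (mkX p S) = n" for S by (simp add: mkX_def n_def)
  have Xn: "mkX p S ! (p!a - 1) = cc S a" if "a < n" for S a
  proof -
    have "p!a - 1 < n" using pmem[OF that] by auto
    then show ?thesis using pmem[OF that] posn[OF that] by (simp add: mkX_def n_def)
  qed
  have posimg: "(\<lambda>i. pos p (Suc i)) ` {..<n} = {..<n}"
  proof
    show "(\<lambda>i. pos p (Suc i)) ` {..<n} \<subseteq> {..<n}" using posS by auto
    show "{..<n} \<subseteq> (\<lambda>i. pos p (Suc i)) ` {..<n}"
    proof
      fix a assume a: "a \<in> {..<n}"
      then have an: "a < n" by simp
      then have "Suc (p!a - 1) = p!a" using pmem[OF an] by simp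
      then have "a = pos p (Suc (p!a - 1))" using posn[OF an] by simp
      moreover have "p!a - 1 < n" using pmem[OF an] by linarith
      ultimately show "a \<in> (\<lambda>i. pos p (Suc i)) ` {..<n}" by blast
    qed
  qed
  have setX: "set (mkX p S) = cc S ` {..<n}" for S
  proof -
    have "set (mkX p S) = (\<lambda>i. cc S (pos p (Suc i))) ` {..<n}"
      by (auto simp: mkX_def n_def)
    also have "\<dots> = cc S ` {..<n}" using posimg by (metis image_image)
    finally show ?thesis .
  qed
  have "cls p = mkX p ` Pow D"
  proof
    show "mkX p ` Pow D \<subseteq> cls p"
    proof
      fix y assume "y \<in> mkX p ` Pow D"
      then obtain S where SD: "S \<subseteq> D" and y: "y = mkX p S" by blast
      have "\<exists>m. set y = {1..m}"
      proof (cases n)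
        case 0 then show ?thesis using setX y by auto
      next
        case (Suc m) then show ?thesis using setX y cc_image by auto
      qed
      moreover have "p = gamma y"
      proof (rule gamma_unique)
        show "distinct p" "set p = {1..length y}" using d sp y lX by auto
        show "sorted_wrt (\<lambda>i j. gkey y i < gkey y j) p"
          unfolding gkey_sorted_iff
        proof (intro allI impI)
          fix a assume a: "Suc a < length p"
          then have A: "y ! (p!a - 1) = cc S a" and B: "y ! (p!Suc a - 1) = cc S (Suc a)"
            using Xn y n_def by auto
          show "gkey y (p ! a) < gkey y (p ! Suc a)"
            unfolding gkey_less A B cc_Suc using SD a by (auto simp: D_def n_def)
        qed
      qed
      ultimately show "y \<in> cls p" by (simp add: cls_def)
    qed
  next
    show "cls p \<subseteq> mkX p ` Pow D"
    proof
      fix y assume "y \<in> cls p"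
      then obtain m where sy: "set y = {1..m}" and gy: "gamma y = p" by (auto simp: cls_def)
      have ly: "length y = n" using gy n_def gamma_length by metis
      define v where "v a = y ! (p!a - 1)" for a
      have yv: "y ! i = v (pos p (Suc i))" if "i < n" for i using posS[OF that] by (simp add: v_def)
      have vmem: "v a \<in> {1..m}" if "a < n" for a using pmem[OF that] ly sy unfolding v_def
        by (metis Suc_le_eq diff_less less_le_trans nth_mem zero_less_one)
      have so: "gkey y (p!a) < gkey y (p!b)" if "a < b" "b < n" for a b
        using sorted_wrt_nth_less[OF gamma_basic(4)[of y] that(1)] that gy n_def by simp
      have vmono: "v a \<le> v b" if "a \<le> b" "b < n" for a b
      proof (cases "a = b")
        case False then show ?thesis using so[of a b] that unfolding gkey_less v_def by auto
      qed simp
      have vdes: "p ! Suc a < p ! a" if "Suc a < n" "v a = v (Suc a)" for a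
        using so[of a "Suc a"] that unfolding gkey_less v_def by auto
      have vhit: "\<exists>b<n. v b = w" if "w \<in> {1..m}" for w
      proof -
        from that sy obtain i where "i < length y" "y!i = w" by (metis in_set_conv_nth)
        then show ?thesis using yv posS ly by metis
      qed
      define S where "S = {a. Suc a < n \<and> v a = v (Suc a)}"
      have SD: "S \<subseteq> D" using vdes by (auto simp: S_def D_def)
      have vc: "a < n \<longrightarrow> v a = cc S a" for a
      proof (induction a)
        case 0
        show ?case
        proof
          assume n0: "0 < n"
          then have "v 0 \<in> {1..m}" by (rule vmem)
          then have "1 \<in> {1..m}" by auto
          then obtain b where "b < n" "v b = 1" using vhit by blast
          then have "v 0 \<le> 1" using vmono[of 0 b] by simp
          then show "v 0 = cc S 0" using vmem[OF n0] by simp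
        qed
      next
        case (Suc a)
        show ?case
        proof
          assume a: "Suc a < n"
          then have IH: "v a = cc S a" using Suc by simp
          have le: "v a \<le> v (Suc a)" using vmono a by simp
          show "v (Suc a) = cc S (Suc a)"
          proof (cases "v a = v (Suc a)")
            case True
            then have "a \<in> S" using a by (simp add: S_def)
            then show ?thesis using IH True by (simp add: cc_Suc)
          next
            case False
            then have "a \<notin> S" by (simp add: S_def)
            have "v (Suc a) = v a + 1"
            proof (rule ccontr)
              assume "v (Suc a) \<noteq> v a + 1"
              then have big: "v a + 1 < v (Suc a)" using le False by simp
              have "v a + 1 \<in> {1..m}" using vmem[OF a] big by auto
              then obtain b where b: "b < n" "v b = v a + 1" using vhit by blast
              show False
              proof (cases "b \<le> a")
                case True then show False using vmono[of b a] a b by simp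
              next
                case False then show False using vmono[of "Suc a" b] b big by simp
              qed
            qed
            then show ?thesis using IH \<open>a \<notin> S\<close> by (simp add: cc_Suc)
          qed
        qed
      qed
      have "y = mkX p S"
      proof (rule nth_equalityI)
        show "length y = length (mkX p S)" using ly lX by simp
        fix i assume "i < length y"
        then have i: "i < n" using ly by simp
        show "y ! i = mkX p S ! i" using yv[OF i] vc posS[OF i] i by (simp add: mkX_def n_def)
      qed
      then show "y \<in> mkX p ` Pow D" using SD by blast
    qed
  qed
  moreover have "inj_on (mkX p) (Pow D)"
  proof (rule inj_onI)
    fix S S' assume S: "S \<in> Pow D" and S': "S' \<in> Pow D" and eq: "mkX p S = mkX p S'"
    have ceq: "cc S a = cc S' a" if "a < n" for a using Xn[OF that, of S] Xn[OF that, of S'] eq by simp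
    have "j \<in> S \<longleftrightarrow> j \<in> S'" if "j \<in> D" for j
    proof -
      have j: "Suc j < n" using that by (simp add: D_def)
      have "cc S (Suc j) = cc S' (Suc j)" "cc S j = cc S' j" using ceq j by auto
      then show ?thesis by (auto simp: cc_Suc split: if_splits)
    qed
    then show "S = S'" using S S' by blast
  qed
  ultimately have "card (cls p) = card (Pow D)" by (simp add: card_image)
  then show ?thesis using card_Pow[OF finD] desD by simp
qed


lemma cay_class_cls: "cay_class y = cls (gamma y)"
  by (simp add: cay_class_def cls_def)

lemma perm_inv_in_cls: assumes "is_perm p" shows "perm_inv p \<in> cls p"
  using perm_inv_perm[OF assms] gamma_perm_inv[OF assms] unfolding cls_def is_perm_def by auto

lemma gamma_is_perm: "is_perm (gamma y)"
  unfolding is_perm_def using gamma_basic[of y] by simp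

lemma class_geq_iff:
  assumes p: "is_perm p" and s: "is_perm \<sigma>"
  shows "class_geq (cls p) (cls \<sigma>) \<longleftrightarrow> contains p \<sigma>"
proof
  assume "class_geq (cls p) (cls \<sigma>)"
  then obtain x y where "x \<in> cls p" "y \<in> cls \<sigma>" "contains x y" by (auto simp: class_geq_def)
  then show "contains p \<sigma>" using contains_gamma[of x y] by (auto simp: cls_def)
next
  assume "contains p \<sigma>"
  then have "contains (perm_inv p) (perm_inv \<sigma>)" using contains_gamma gamma_perm p s by metis
  then show "class_geq (cls p) (cls \<sigma>)" using perm_inv_in_cls[OF p] perm_inv_in_cls[OF s]
    by (auto simp: class_geq_def)
qed

lemma Perms_iff: "p \<in> Perms n \<longleftrightarrow> is_perm p \<and> length p = n"
proof
  assume "p \<in> Perms n"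
  then have "distinct p" "set p = {1..n}" by (auto simp: Perms_def)
  moreover then have "length p = n" using distinct_card by fastforce
  ultimately show "is_perm p \<and> length p = n" by (simp add: is_perm_def)
qed (auto simp: Perms_def is_perm_def)

theorem corollary4p12:
  fixes n :: nat and \<sigma> :: "nat list"
  assumes "is_perm \<sigma>"
  shows "(\<Sum>\<pi>\<in>Av n \<sigma>. [:0, 1:] ^ des \<pi> :: int poly)
       = (\<Sum>C\<in>Cay_classes_avoiding n (perm_inv \<sigma>). [:0, 1:] ^ nat \<lfloor>log 2 (real (card C))\<rfloor>)"
proof -
  define g where "g C = ([:0, 1:] :: int poly) ^ nat \<lfloor>log 2 (real (card C))\<rfloor>" for C :: "nat list set"
  have ctau: "cay_class (perm_inv \<sigma>) = cls \<sigma>" using cay_class_cls gamma_perm_inv[OF assms] by simp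
  have bij: "bij_betw cls (Av n \<sigma>) (Cay_classes_avoiding n (perm_inv \<sigma>))"
  proof (rule bij_betw_imageI)
    show "inj_on cls (Av n \<sigma>)"
    proof (rule inj_onI)
      fix p q assume "p \<in> Av n \<sigma>" "q \<in> Av n \<sigma>" and e: "cls p = cls q"
      then have p: "is_perm p" and q: "is_perm q" by (auto simp: Av_def Perms_iff)
      have "perm_inv p \<in> cls q" using perm_inv_in_cls[OF p] e by simp
      then show "p = q" using gamma_perm_inv[OF p] by (simp add: cls_def)
    qed
    show "cls ` Av n \<sigma> = Cay_classes_avoiding n (perm_inv \<sigma>)"
    proof
      show "cls ` Av n \<sigma> \<subseteq> Cay_classes_avoiding n (perm_inv \<sigma>)"
      proof
        fix C assume "C \<in> cls ` Av n \<sigma>"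
        then obtain p where pA: "p \<in> Av n \<sigma>" and C: "C = cls p" by blast
        then have p: "is_perm p" and lp: "length p = n" and nc: "\<not> contains p \<sigma>"
          by (auto simp: Av_def Perms_iff)
        have "perm_inv p \<in> Cay n" using perm_inv_perm[OF p] lp by (auto simp: Cay_def is_perm_def)
        moreover have "cay_class (perm_inv p) = C" using C cay_class_cls gamma_perm_inv[OF p] by simp
        moreover have "\<not> class_geq C (cls \<sigma>)" using class_geq_iff[OF p assms] nc C by simp
        ultimately show "C \<in> Cay_classes_avoiding n (perm_inv \<sigma>)"
          unfolding Cay_classes_avoiding_def ctau by blast
      qed
      show "Cay_classes_avoiding n (perm_inv \<sigma>) \<subseteq> cls ` Av n \<sigma>"
      proof
        fix C assume "C \<in> Cay_classes_avoiding n (perm_inv \<sigma>)"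
        then obtain y where y: "y \<in> Cay n" and C: "C = cay_class y"
          and nc: "\<not> class_geq (cay_class y) (cls \<sigma>)"
          unfolding Cay_classes_avoiding_def ctau by blast
        have "length (gamma y) = n" using y by (simp add: Cay_def)
        then have "gamma y \<in> Perms n" using gamma_is_perm Perms_iff by blast
        moreover have "\<not> contains (gamma y) \<sigma>"
          using nc class_geq_iff[OF gamma_is_perm assms] cay_class_cls by simp
        ultimately have "gamma y \<in> Av n \<sigma>" by (simp add: Av_def)
        then show "C \<in> cls ` Av n \<sigma>" using C cay_class_cls by blast
      qed
    qed
  qed
  have gc: "g (cls p) = [:0, 1:] ^ des p" if "p \<in> Av n \<sigma>" for p
  proof -
    have "is_perm p" using that by (auto simp: Av_def Perms_iff)
    then have "card (cls p) = 2 ^ des p" by (rule card_cls)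
    then have "real (card (cls p)) = 2 ^ des p" by simp
    then show ?thesis unfolding g_def by simp
  qed
  have "(\<Sum>\<pi>\<in>Av n \<sigma>. [:0, 1:] ^ des \<pi> :: int poly) = (\<Sum>\<pi>\<in>Av n \<sigma>. g (cls \<pi>))"
    using gc by simp
  also have "\<dots> = (\<Sum>C\<in>Cay_classes_avoiding n (perm_inv \<sigma>). g C)"
    by (rule sum.reindex_bij_betw[OF bij])
  finally show ?thesis unfolding g_def .
qed

end
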